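(* Let $T$ be an $n$-vertex tournament with an optimal ordering $v_1,\ldots,v_n$, and let $B$ be the set of backwards edges in this ordering, with $|B|=\alpha n^2$. Suppose that the subset $B'\subseteq B$ of backwards edges of length at least $n/16$ satisfies $|B'|\ge \alpha n^2/4$. If $\alpha\le 2^{-16}$, then there exists $B''\subseteq B'$ with $|B''|\ge |B'|/2$ such that every edge of $B''$ lies in at least $n/64$ directed triangles of $T$.
   Context: Given an ordering $v_1,\ldots,v_n$ of the vertices of a tournament $T$, a backwards edge is an edge directed from $v_j$ to $v_i$ with $i<j$; its length is $j-i$. An ordering is optimal if it minimizes the number of backwards edges among all orderings of $V(T)$. A directed triangle is a set of three vertices $x,y,z$ with edges directed $x\to y$, $y\to z$, $z\to x$. *)

theory Defs
  imports Main "HOL-Library.Set_Algebras" Complex_Main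
begin

definition tournament :: "'a set \<Rightarrow> ('a \<times> 'a) set \<Rightarrow> bool" where
  "tournament V E \<longleftrightarrow> finite V \<and> E \<subseteq> V \<times> V \<and> (\<forall>v. (v, v) \<notin> E) \<and>
     (\<forall>u\<in>V. \<forall>v\<in>V. u \<noteq> v \<longrightarrow> ((u, v) \<in> E \<longleftrightarrow> (v, u) \<notin> E))"

text \<open>An ordering v_1..v_n of V, as a list (index 0 = v_1).\<close>
definition vertex_ordering :: "'a set \<Rightarrow> 'a list \<Rightarrow> bool" where
  "vertex_ordering V vs \<longleftrightarrow> distinct vs \<and> set vs = V"

definition backwards_edges :: "('a \<times> 'a) set \<Rightarrow> 'a list \<Rightarrow> ('a \<times> 'a) set" where
  "backwards_edges E vs = {(vs ! j, vs ! i) | i j. i < j \<and> j < length vs \<and> (vs ! j, vs ! i) \<in> E}"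

definition long_backwards_edges :: "('a \<times> 'a) set \<Rightarrow> 'a list \<Rightarrow> real \<Rightarrow> ('a \<times> 'a) set" where
  "long_backwards_edges E vs L =
     {(vs ! j, vs ! i) | i j. i < j \<and> j < length vs \<and> (vs ! j, vs ! i) \<in> E \<and> real (j - i) \<ge> L}"

definition optimal_ordering :: "'a set \<Rightarrow> ('a \<times> 'a) set \<Rightarrow> 'a list \<Rightarrow> bool" where
  "optimal_ordering V E vs \<longleftrightarrow> vertex_ordering V vs \<and>
     (\<forall>ws. vertex_ordering V ws \<longrightarrow> card (backwards_edges E vs) \<le> card (backwards_edges E ws))"

definition directed_triangles :: "'a set \<Rightarrow> ('a \<times> 'a) set \<Rightarrow> 'a set set" where
  "directed_triangles V E = {{x, y, z} | x y z. x \<in> V \<and> y \<in> V \<and> z \<in> V \<and>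
      (x, y) \<in> E \<and> (y, z) \<in> E \<and> (z, x) \<in> E}"

definition triangles_on_edge :: "'a set \<Rightarrow> ('a \<times> 'a) set \<Rightarrow> 'a \<times> 'a \<Rightarrow> nat" where
  "triangles_on_edge V E e = card {t \<in> directed_triangles V E. fst e \<in> t \<and> snd e \<in> t}"

end

theory Submission imports Defs begin

fun bef :: "'a list \<Rightarrow> 'a \<Rightarrow> 'a \<Rightarrow> bool" where
  "bef [] b a = False"
| "bef (x#xs) b a = ((b = x \<and> a \<in> set xs) \<or> bef xs b a)"

lemma bef_nth: "bef xs b a \<longleftrightarrow> (\<exists>i j. i < j \<and> j < length xs \<and> xs!i = b \<and> xs!j = a)"
proof (induction xs)
  case Nil then show ?case by simp
next
  case (Cons x xs)
  show ?case
  proof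
    assume "bef (x#xs) b a"
    then consider "b = x" "a \<in> set xs" | "bef xs b a" by auto
    then show "\<exists>i j. i < j \<and> j < length (x#xs) \<and> (x#xs)!i = b \<and> (x#xs)!j = a"
    proof cases
      case 1
      then obtain j where "j < length xs" "xs!j = a" by (auto simp: in_set_conv_nth)
      then show ?thesis using 1 by (intro exI[of _ 0] exI[of _ "Suc j"]) auto
    next
      case 2
      then obtain i j where "i<j" "j<length xs" "xs!i=b" "xs!j=a" using Cons.IH by auto
      then show ?thesis by (intro exI[of _ "Suc i"] exI[of _ "Suc j"]) auto
    qed
  next
    assume "\<exists>i j. i < j \<and> j < length (x#xs) \<and> (x#xs)!i = b \<and> (x#xs)!j = a"
    then obtain i j where h: "i<j" "j<length (x#xs)" "(x#xs)!i=b" "(x#xs)!j=a" by blast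
    then obtain j' where j': "j = Suc j'" by (cases j) auto
    show "bef (x#xs) b a"
    proof (cases i)
      case 0
      then show ?thesis using h j' by auto
    next
      case (Suc i')
      have "\<exists>i j. i < j \<and> j < length xs \<and> xs!i = b \<and> xs!j = a"
        using h j' Suc by (intro exI[of _ i'] exI[of _ j']) auto
      then have "bef xs b a" using Cons.IH by auto
      then show ?thesis by simp
    qed
  qed
qed

lemma backwards_bef: "backwards_edges E xs = {(a,b). (a,b)\<in>E \<and> bef xs b a}"
  unfolding backwards_edges_def bef_nth by blast

lemma bef_append: "bef (xs@ys) b a \<longleftrightarrow> bef xs b a \<or> bef ys b a \<or> (b\<in>set xs \<and> a\<in>set ys)"
  by (induction xs) auto

lemma bef_set: "bef xs b a \<Longrightarrow> b\<in>set xs \<and> a\<in>set xs"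
  by (induction xs) auto

lemma fin_back: "finite (backwards_edges E zs)"
proof -
  have "backwards_edges E zs \<subseteq> set zs \<times> set zs" by (auto simp: backwards_bef dest: bef_set)
  then show ?thesis by (rule finite_subset) auto
qed

lemma move_card:
  assumes "xs = P @ L @ u # S" "ys = P @ u # L @ S" "distinct xs"
  shows "card (backwards_edges E ys) + card {x\<in>set L. (u,x)\<in>E} = card (backwards_edges E xs) + card {x\<in>set L. (x,u)\<in>E}"
proof -
  define D1 where "D1 = (\<lambda>x. (u,x)) ` {x\<in>set L. (u,x)\<in>E}"
  define D2 where "D2 = (\<lambda>x. (x,u)) ` {x\<in>set L. (x,u)\<in>E}"
  define R where "R = backwards_edges E xs - D1"
  have c1: "card D1 = card {x\<in>set L. (u,x)\<in>E}" unfolding D1_def by (rule card_image) (auto simp: inj_on_def)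
  have c2: "card D2 = card {x\<in>set L. (x,u)\<in>E}" unfolding D2_def by (rule card_image) (auto simp: inj_on_def)
  have dd: "distinct (P @ L @ u # S)" using assms by simp
  have s1: "D1 \<subseteq> backwards_edges E xs" using assms(1) by (auto simp: D1_def backwards_bef bef_append)
  have s2: "backwards_edges E ys = R \<union> D2" using assms(1,2) dd
    by (auto simp: R_def D1_def D2_def backwards_bef bef_append dest: bef_set)
  have d: "R \<inter> D2 = {}" using assms(1) dd by (auto simp: R_def D2_def backwards_bef bef_append dest: bef_set)
  have fD1: "finite D1" using finite_subset[OF s1 fin_back] .
  have "card (backwards_edges E xs) = card R + card D1"
    using card_Diff_subset[OF fD1 s1] card_mono[OF fin_back s1] unfolding R_def by simp
  moreover have "card (backwards_edges E ys) = card R + card D2"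
    unfolding s2 by (rule card_Un_disjoint) (use d in \<open>auto simp: R_def D2_def intro: finite_Diff fin_back\<close>)
  ultimately show ?thesis using c1 c2 by simp
qed

lemma "2 powr (-16::real) = 1/65536" by (simp add: powr_minus powr_realpow)


lemma tri_bound:
  assumes tour: "tournament V E" and dv: "distinct vs" and sv: "set vs = V"
    and opt: "\<And>ws. distinct ws \<Longrightarrow> set ws = V \<Longrightarrow> card (backwards_edges E vs) \<le> card (backwards_edges E ws)"
    and ij: "i < j" "j < length vs" and e: "(vs!j, vs!i) \<in> E"
  shows "j - i \<le> 2 * triangles_on_edge V E (vs!j, vs!i) + 2 * card {y. (vs!j, y) \<in> backwards_edges E vs}"
    and "j - i \<le> 2 * triangles_on_edge V E (vs!j, vs!i) + 2 * card {x. (x, vs!i) \<in> backwards_edges E vs}"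
proof -
  define u where "u = vs!j"
  define w where "w = vs!i"
  define P where "P = take i vs"
  define M where "M = take (j-i-1) (drop (Suc i) vs)"
  define S where "S = drop (Suc j) vs"
  have dec: "vs = P @ w # M @ u # S"
  proof -
    have "vs = take i vs @ drop i vs" by simp
    also have "drop i vs = w # drop (Suc i) vs" unfolding w_def using ij by (simp add: Cons_nth_drop_Suc)
    also have "drop (Suc i) vs = M @ drop (j-i-1) (drop (Suc i) vs)" unfolding M_def by (rule append_take_drop_id[symmetric])
    also have "drop (j-i-1) (drop (Suc i) vs) = drop j vs" using ij by simp
    also have "drop j vs = u # S" unfolding u_def S_def using ij by (simp add: Cons_nth_drop_Suc)
    finally show ?thesis unfolding P_def by simp
  qed
  have dd: "distinct (P @ w # M @ u # S)" using dv dec by simp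
  have lenM: "length M = j - i - 1" unfolding M_def using ij by simp
  have dM: "distinct M" using dd by simp
  have cardM: "card (set M) = j - i - 1" using lenM distinct_card[OF dM] by simp
  have VE: "finite V" "E \<subseteq> V \<times> V" "\<And>v. (v,v) \<notin> E"
     "\<And>x y. x\<in>V \<Longrightarrow> y\<in>V \<Longrightarrow> x \<noteq> y \<Longrightarrow> (x,y) \<in> E \<longleftrightarrow> (y,x) \<notin> E"
    using tour unfolding tournament_def by blast+
  have MV: "set M \<subseteq> V" "u \<in> V" "w \<in> V"
  proof -
    have "set vs = insert w (insert u (set P \<union> set M \<union> set S))" by (subst dec) auto
    then show "set M \<subseteq> V" "u \<in> V" "w \<in> V" using sv by blast+
  qed
  have uw: "(u,w) \<in> E" "(w,u) \<notin> E" using e VE(4)[of u w] MV dd unfolding u_def[symmetric] w_def[symmetric] by auto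
  define Aout where "Aout = {x\<in>set M. (u,x)\<in>E}"
  define Ain where "Ain = {x\<in>set M. (x,u)\<in>E}"
  define Cin where "Cin = {x\<in>set M. (x,w)\<in>E}"
  define Cout where "Cout = {x\<in>set M. (w,x)\<in>E}"
  have pA: "card Ain + card Aout = j - i - 1"
  proof -
    have "Ain \<union> Aout = set M" "Ain \<inter> Aout = {}" using VE(4) MV dd by (auto simp: Ain_def Aout_def)
    then show ?thesis using cardM card_Un_disjoint[of Ain Aout] by (simp add: Ain_def Aout_def)
  qed
  have pC: "card Cin + card Cout = j - i - 1"
  proof -
    have "Cin \<union> Cout = set M" "Cin \<inter> Cout = {}" using VE(4) MV dd by (auto simp: Cin_def Cout_def)
    then show ?thesis using cardM card_Un_disjoint[of Cin Cout] by (simp add: Cin_def Cout_def)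
  qed
  have F1: "Suc (card Aout) \<le> card Ain"
  proof -
    define ys where "ys = P @ u # (w # M) @ S"
    have "distinct ys" "set ys = V" using dd sv dec by (auto simp: ys_def)
    then have le: "card (backwards_edges E vs) \<le> card (backwards_edges E ys)" by (rule opt)
    have "card (backwards_edges E ys) + card {x\<in>set (w#M). (u,x)\<in>E} = card (backwards_edges E vs) + card {x\<in>set (w#M). (x,u)\<in>E}"
      by (rule move_card[of vs P "w#M" u S]) (use dec dv in \<open>auto simp: ys_def\<close>)
    moreover have "{x\<in>set (w#M). (u,x)\<in>E} = insert w Aout" using uw by (auto simp: Aout_def)
    moreover have "{x\<in>set (w#M). (x,u)\<in>E} = Ain" using uw by (auto simp: Ain_def)
    moreover have "card (insert w Aout) = Suc (card Aout)" using dd by (simp add: Aout_def)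
    ultimately show ?thesis using le by simp
  qed
  have F2: "Suc (card Cin) \<le> card Cout"
  proof -
    define ys where "ys = P @ (M @ [u]) @ w # S"
    have "distinct ys" "set ys = V" using dd sv dec by (auto simp: ys_def)
    then have le: "card (backwards_edges E vs) \<le> card (backwards_edges E ys)" by (rule opt)
    have "card (backwards_edges E vs) + card {x\<in>set (M@[u]). (w,x)\<in>E} = card (backwards_edges E ys) + card {x\<in>set (M@[u]). (x,w)\<in>E}"
      by (rule move_card[of ys P "M@[u]" w S]) (use dec dd in \<open>auto simp: ys_def\<close>)
    moreover have "{x\<in>set (M@[u]). (x,w)\<in>E} = insert u Cin" using uw by (auto simp: Cin_def)
    moreover have "{x\<in>set (M@[u]). (w,x)\<in>E} = Cout" using uw by (auto simp: Cout_def)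
    moreover have "card (insert u Cin) = Suc (card Cin)" using dd by (simp add: Cin_def)
    ultimately show ?thesis using le by simp
  qed
  have tri: "card (Ain \<inter> Cout) \<le> triangles_on_edge V E (u, w)"
  proof -
    have fin: "finite {t \<in> directed_triangles V E. fst (u,w) \<in> t \<and> snd (u,w) \<in> t}"
      by (rule finite_subset[of _ "Pow V"]) (auto simp: directed_triangles_def VE(1))
    have "card (Ain \<inter> Cout) \<le> card {t \<in> directed_triangles V E. fst (u,w) \<in> t \<and> snd (u,w) \<in> t}"
    proof (rule card_inj_on_le[of "\<lambda>x. {w,x,u}"])
      show "inj_on (\<lambda>x. {w,x,u}) (Ain \<inter> Cout)" using dd by (auto simp: inj_on_def Ain_def Cout_def)
      show "(\<lambda>x. {w,x,u}) ` (Ain \<inter> Cout) \<subseteq> {t \<in> directed_triangles V E. fst (u,w) \<in> t \<and> snd (u,w) \<in> t}"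
        using MV uw unfolding directed_triangles_def Ain_def Cout_def by fastforce
    qed (rule fin)
    then show ?thesis unfolding triangles_on_edge_def .
  qed
  have IU: "card (Ain \<inter> Cout) + card (Ain \<union> Cout) = card Ain + card Cout"
    using card_Un_Int[of Ain Cout] by (simp add: Ain_def Cout_def)
  have "card (Ain \<union> Cout) \<le> j - i - 1"
    using card_mono[of "set M" "Ain \<union> Cout"] cardM by (auto simp: Ain_def Cout_def)
  have befM1: "bef vs x u" if "x \<in> set M" for x
  proof -
    have "bef (P @ w # M @ u # S) x u" using that by (simp add: bef_append)
    then show ?thesis using dec by simp
  qed
  have befM2: "bef vs w x" if "x \<in> set M" for x
  proof -
    have "bef (P @ w # M @ u # S) w x" using that by (simp add: bef_append)
    then show ?thesis using dec by simp
  qed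
  have f1: "finite {y. (u, y) \<in> backwards_edges E vs}"
  proof -
    have "{y. (u, y) \<in> backwards_edges E vs} \<subseteq> snd ` backwards_edges E vs" by force
    then show ?thesis using finite_imageI[OF fin_back] finite_subset by blast
  qed
  have f2: "finite {x. (x, w) \<in> backwards_edges E vs}"
  proof -
    have "{x. (x, w) \<in> backwards_edges E vs} \<subseteq> fst ` backwards_edges E vs" by force
    then show ?thesis using finite_imageI[OF fin_back] finite_subset by blast
  qed
  have ao: "card Aout \<le> card {y. (vs!j, y) \<in> backwards_edges E vs}"
    unfolding u_def[symmetric] by (rule card_mono[OF f1]) (auto simp: Aout_def backwards_bef befM1)
  have ci: "card Cin \<le> card {x. (x, vs!i) \<in> backwards_edges E vs}"
    unfolding w_def[symmetric] by (rule card_mono[OF f2]) (auto simp: Cin_def backwards_bef befM2)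
  show "j - i \<le> 2 * triangles_on_edge V E (vs!j, vs!i) + 2 * card {y. (vs!j, y) \<in> backwards_edges E vs}"
    using ao tri IU F1 F2 pA pC \<open>card (Ain \<union> Cout) \<le> j - i - 1\<close> ij unfolding u_def w_def by linarith
  show "j - i \<le> 2 * triangles_on_edge V E (vs!j, vs!i) + 2 * card {x. (x, vs!i) \<in> backwards_edges E vs}"
    using ci tri IU F1 F2 pA pC \<open>card (Ain \<union> Cout) \<le> j - i - 1\<close> ij unfolding u_def w_def by linarith
qed


lemma card_high:
  fixes B :: "'b set" and f :: "'b \<Rightarrow> 'a"
  assumes fB: "finite B" and t0: "t \<ge> 0"
  shows "real (card {x. real (card {e\<in>B. f e = x}) > t}) * t \<le> real (card B)"
proof -
  define X where "X = {x. real (card {e\<in>B. f e = x}) > t}"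
  have "X \<subseteq> f ` B \<or> t < 0"
  proof (cases "t < 0")
    case False
    { fix x assume "x \<in> X"
      then have "card {e\<in>B. f e = x} > 0" using False by (auto simp: X_def)
      then have "x \<in> f ` B" by (auto simp: card_gt_0_iff) }
    then show ?thesis by blast
  qed simp
  show ?thesis
  proof (cases "t < 0")
    case True then show ?thesis using t0 by simp
  next
    case False
    then have XB: "X \<subseteq> f ` B" using \<open>X \<subseteq> f ` B \<or> t < 0\<close> by blast
    have fX: "finite X" using XB fB finite_subset by blast
    have "real (card X) * t = (\<Sum>x\<in>X. t)" by simp
    also have "\<dots> \<le> (\<Sum>x\<in>X. real (card {e\<in>B. f e = x}))"
      by (rule sum_mono) (auto simp: X_def)
    also have "\<dots> = real (\<Sum>x\<in>X. card {e\<in>B. f e = x})" by simp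
    also have "(\<Sum>x\<in>X. card {e\<in>B. f e = x}) = card (\<Union>x\<in>X. {e\<in>B. f e = x})"
      by (rule card_UN_disjoint[symmetric]) (use fX fB in auto)
    also have "\<dots> \<le> card B" by (rule card_mono[OF fB]) auto
    finally show ?thesis unfolding X_def by simp
  qed
qed

lemma card_out: "card {y. (x,y) \<in> B} = card {e\<in>B. fst e = x}"
proof -
  have "{e\<in>B. fst e = x} = (\<lambda>y. (x,y)) ` {y. (x,y) \<in> B}" by force
  then show ?thesis by (simp add: card_image inj_on_def)
qed
lemma card_in: "card {y. (y,x) \<in> B} = card {e\<in>B. snd e = x}"
proof -
  have "{e\<in>B. snd e = x} = (\<lambda>y. (y,x)) ` {y. (y,x) \<in> B}" by force
  then show ?thesis by (simp add: card_image inj_on_def)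
qed

theorem mainTheorem4:
  fixes V :: "'a set" and E :: "('a \<times> 'a) set" and vs :: "'a list"
    and n :: nat and \<alpha> :: real
  assumes "tournament V E"
    and "card V = n"
    and "optimal_ordering V E vs"
    and "real (card (backwards_edges E vs)) = \<alpha> * real n ^ 2"
    and "real (card (long_backwards_edges E vs (real n / 16))) \<ge> \<alpha> * real n ^ 2 / 4"
    and "\<alpha> \<le> 2 powr (-16)"
  shows "\<exists>B''. B'' \<subseteq> long_backwards_edges E vs (real n / 16) \<and>
           real (card B'') \<ge> real (card (long_backwards_edges E vs (real n / 16))) / 2 \<and>
           (\<forall>e\<in>B''. real (triangles_on_edge V E e) \<ge> real n / 64)"
proof -
  have tour: "tournament V E" by (rule assms(1))
  have dv: "distinct vs" and sv: "set vs = V"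
    using assms(3) unfolding optimal_ordering_def vertex_ordering_def by auto
  have opt: "\<And>ws. distinct ws \<Longrightarrow> set ws = V \<Longrightarrow> card (backwards_edges E vs) \<le> card (backwards_edges E ws)"
    using assms(3) unfolding optimal_ordering_def vertex_ordering_def by auto
  have len: "length vs = n" using dv sv assms(2) distinct_card by fastforce
  define B where "B = backwards_edges E vs"
  define B' where "B' = long_backwards_edges E vs (real n / 16)"
  have finB: "finite B" unfolding B_def by (rule fin_back)
  have B'B: "B' \<subseteq> B" unfolding B_def B'_def backwards_edges_def long_backwards_edges_def by blast
  have finB': "finite B'" using finite_subset[OF B'B finB] .
  define t :: real where "t = real n / 64"
  define X where "X = {x. real (card {e\<in>B. fst e = x}) > t}"
  define Y where "Y = {x. real (card {e\<in>B. snd e = x}) > t}"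
  have t0: "t \<ge> 0" by (simp add: t_def)
  have hX: "real (card X) * t \<le> real (card B)" unfolding X_def by (rule card_high[OF finB t0])
  have hY: "real (card Y) * t \<le> real (card B)" unfolding Y_def by (rule card_high[OF finB t0])
  define bad where "bad = B' \<inter> (X \<times> Y)"
  define B'' where "B'' = B' - bad"
  have cB: "real (card B) = \<alpha> * real n ^ 2" using assms(4) B_def by simp
  have cB': "real (card B') \<ge> \<alpha> * real n ^ 2 / 4" using assms(5) B'_def by simp
  have a16: "\<alpha> \<le> 1/65536" using assms(6) by (simp add: powr_minus powr_realpow)
  have badle: "real (card bad) \<le> real (card B') / 4"
  proof (cases "n = 0")
    case True then have "B' = {}" using len unfolding B'_def long_backwards_edges_def by auto
    then show ?thesis by (simp add: bad_def)
  next
    case False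
    then have np: "real n > 0" by simp
    have a0: "\<alpha> \<ge> 0"
    proof -
      have "\<alpha> * real n ^ 2 \<ge> 0" using cB[symmetric] by simp
      then show ?thesis using np by (simp add: zero_le_mult_iff)
    qed
    have tp: "t > 0" using np by (simp add: t_def)
    have cX: "real (card X) \<le> 64 * \<alpha> * real n"
    proof -
      have "real (card X) * real n \<le> (64 * \<alpha> * real n) * real n"
        using hX cB by (simp add: t_def power2_eq_square)
      then show ?thesis using np by simp
    qed
    have cY: "real (card Y) \<le> 64 * \<alpha> * real n"
    proof -
      have "real (card Y) * real n \<le> (64 * \<alpha> * real n) * real n"
        using hY cB by (simp add: t_def power2_eq_square)
      then show ?thesis using np by simp
    qed
    have fX: "finite X"
    proof -
      have "X \<subseteq> fst ` B"
      proof
        fix x assume "x \<in> X"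
        then have "card {e\<in>B. fst e = x} > 0" using tp unfolding X_def by simp
        then obtain e where "e \<in> B" "fst e = x" by (auto simp: card_gt_0_iff)
        then show "x \<in> fst ` B" by force
      qed
      then show ?thesis using finB finite_subset by blast
    qed
    have fY: "finite Y"
    proof -
      have "Y \<subseteq> snd ` B"
      proof
        fix x assume "x \<in> Y"
        then have "card {e\<in>B. snd e = x} > 0" using tp unfolding Y_def by simp
        then obtain e where "e \<in> B" "snd e = x" by (auto simp: card_gt_0_iff)
        then show "x \<in> snd ` B" by force
      qed
      then show ?thesis using finB finite_subset by blast
    qed
    have "card bad \<le> card (X \<times> Y)" unfolding bad_def by (rule card_mono) (use fX fY in auto)
    then have "real (card bad) \<le> real (card X) * real (card Y)"
      by (simp add: card_cartesian_product) (metis of_nat_le_iff of_nat_mult)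
    also have "\<dots> \<le> (64 * \<alpha> * real n) * (64 * \<alpha> * real n)"
      by (rule mult_mono[OF cX cY]) (use a0 in auto)
    also have "\<dots> = (4096 * \<alpha>) * (\<alpha> * real n ^ 2)" by (simp add: power2_eq_square)
    also have "\<dots> \<le> (4096 * (1/65536)) * (\<alpha> * real n ^ 2)"
      by (rule mult_right_mono) (use a16 a0 in auto)
    also have "\<dots> \<le> real (card B') / 4" using cB' by simp
    finally show ?thesis .
  qed
  have "card B'' = card B' - card bad" unfolding B''_def
    by (rule card_Diff_subset) (use finB' in \<open>auto simp: bad_def\<close>)
  moreover have "card bad \<le> card B'" by (rule card_mono[OF finB']) (auto simp: bad_def)
  ultimately have cB'': "real (card B'') \<ge> real (card B') / 2" using badle by (simp add: of_nat_diff)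
  have tri: "real (triangles_on_edge V E e) \<ge> real n / 64" if eB: "e \<in> B''" for e
  proof -
    have "e \<in> B'" "e \<notin> X \<times> Y" using eB by (auto simp: B''_def bad_def)
    then obtain i j where ij: "e = (vs!j, vs!i)" "i < j" "j < length vs" "(vs!j, vs!i) \<in> E"
      "real (j - i) \<ge> real n / 16"
      unfolding B'_def long_backwards_edges_def by blast
    note tb = tri_bound[OF tour dv sv opt ij(2,3,4)]
    have "vs!j \<notin> X \<or> vs!i \<notin> Y" using \<open>e \<notin> X \<times> Y\<close> ij(1) by auto
    then show ?thesis
    proof
      assume "vs!j \<notin> X"
      then have "real (card {y. (vs!j, y) \<in> backwards_edges E vs}) \<le> t"
        unfolding X_def B_def card_out by simp
      moreover have "real (j - i) \<le> 2 * real (triangles_on_edge V E (vs!j, vs!i)) + 2 * real (card {y. (vs!j, y) \<in> backwards_edges E vs})"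
        using tb(1) by linarith
      ultimately show ?thesis using ij(1,5) by (simp add: t_def)
    next
      assume "vs!i \<notin> Y"
      then have "real (card {x. (x, vs!i) \<in> backwards_edges E vs}) \<le> t"
        unfolding Y_def B_def card_in by simp
      moreover have "real (j - i) \<le> 2 * real (triangles_on_edge V E (vs!j, vs!i)) + 2 * real (card {x. (x, vs!i) \<in> backwards_edges E vs})"
        using tb(2) by linarith
      ultimately show ?thesis using ij(1,5) by (simp add: t_def)
    qed
  qed
  show ?thesis
    by (rule exI[of _ B'']) (use cB'' tri in \<open>auto simp: B''_def B'_def\<close>)
qed

end
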